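(* Let $\mu_1,\mu_2$ form an AT-system on nodes $z_1,\dots,z_N$. Let $(A_{n,1},A_{n,2})$, $1\le n\le N$, be the type I multiple orthogonal polynomials on the step-line, with exact degrees $\deg A_{n,j}=n_j-1$ (where $\vec n=(n_1,n_2)$ is the step-line index of $n$), and suppose they satisfy, for $j=1,2$ and $1\le n\le N-2$, $$xA_{n,j}(x)=A_{n-1,j}(x)+b_{n-1}A_{n,j}(x)+c_nA_{n+1,j}(x)+d_{n+1}A_{n+2,j}(x),$$ with $A_{0,j}\equiv0$, where $b_n,c_n,d_n$ are the coefficients of the step-line recurrence of the monic type II polynomials. Then $d_{n+1}\neq0$ for all $n=1,\dots,N-2$.
   Context: Discrete measures: $\mu_j=\sum_{i=1}^N\alpha_{j,i}\delta_{z_i}$, $j=1,2$, with $\alpha_{j,i}>0$ and distinct real $z_i$; $\Delta\subset\mathbb{R}$ is an interval containing all $z_i$. A system of $n$ linearly independent functions on $\Delta$ is a Chebyshev system if every nontrivial real linear combination has at most $n-1$ zeros in $\Delta$. The measures form an AT-system if there exist continuous functions $\alpha_1,\alpha_2$ on $\Delta$ with $\alpha_j(z_i)=\alpha_{j,i}$ such that for every $(n_1,n_2)$ with $n_1+n_2\le N$ the functions $x^k\alpha_1(x)$ ($0\le k\le n_1-1$), $x^k\alpha_2(x)$ ($0\le k\le n_2-1$) form a Chebyshev system on $\Delta$. Step-line index: $n=2k\mapsto\vec n=(k,k)$, $n=2k+1\mapsto\vec n=(k+1,k)$. Type I MOPs for index $\vec n$: polynomials $A_{\vec n,1},A_{\vec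 n,2}$ with $\deg A_{\vec n,j}\le n_j-1$ such that $\sum_{i=1}^N\big(\alpha_{1,i}A_{\vec n,1}(z_i)+\alpha_{2,i}A_{\vec n,2}(z_i)\big)z_i^k$ equals $0$ for $0\le k\le |\vec n|-2$ and $1$ for $k=|\vec n|-1$; $A_{n,j}:=A_{\vec n,j}$. Monic type II MOP $P_n$: monic of degree $n=|\vec n|$ with $\sum_i\alpha_{j,i}P_n(z_i)z_i^k=0$ for $0\le k\le n_j-1$, $j=1,2$; they satisfy $xP_n=P_{n+1}+b_nP_n+c_nP_{n-1}+d_nP_{n-2}$. *)

theory Defs
  imports "HOL-Analysis.Analysis" "HOL-Computational_Algebra.Polynomial"
begin

definition chebyshev_system :: "real set \<Rightarrow> (real \<Rightarrow> real) list \<Rightarrow> bool" where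
  "chebyshev_system D fs \<longleftrightarrow>
     (\<forall>c::nat \<Rightarrow> real. (\<forall>x\<in>D. (\<Sum>k<length fs. c k * (fs ! k) x) = 0) \<longrightarrow> (\<forall>k<length fs. c k = 0)) \<and>
     (\<forall>c::nat \<Rightarrow> real. (\<exists>k<length fs. c k \<noteq> 0) \<longrightarrow>
        finite {x\<in>D. (\<Sum>k<length fs. c k * (fs ! k) x) = 0} \<and>
        card {x\<in>D. (\<Sum>k<length fs. c k * (fs ! k) x) = 0} \<le> length fs - 1)"

text \<open>AT-system for the discrete measures mu_j = sum_{i=1..N} alpha j i delta_{z i}, j = 1,2.\<close>
definition AT_system :: "real set \<Rightarrow> nat \<Rightarrow> (nat \<Rightarrow> real) \<Rightarrow> (nat \<Rightarrow> nat \<Rightarrow> real) \<Rightarrow> bool" where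
  "AT_system D N z alpha \<longleftrightarrow>
     (\<exists>a1 a2 :: real \<Rightarrow> real. continuous_on D a1 \<and> continuous_on D a2 \<and>
        (\<forall>i\<in>{1..N}. a1 (z i) = alpha 1 i \<and> a2 (z i) = alpha 2 i) \<and>
        (\<forall>n1 n2. n1 + n2 \<le> N \<longrightarrow>
           chebyshev_system D (map (\<lambda>k x. x ^ k * a1 x) [0..<n1] @ map (\<lambda>k x. x ^ k * a2 x) [0..<n2])))"

definition sl :: "nat \<Rightarrow> nat \<Rightarrow> nat" where
  "sl n j = (if j = 1 then (n + 1) div 2 else n div 2)"

definition typeI :: "nat \<Rightarrow> (nat \<Rightarrow> real) \<Rightarrow> (nat \<Rightarrow> nat \<Rightarrow> real) \<Rightarrow> nat \<Rightarrow> (nat \<Rightarrow> real poly) \<Rightarrow> bool" where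
  "typeI N z alpha n A \<longleftrightarrow>
     (\<forall>j\<in>{1,2::nat}. (sl n j = 0 \<longrightarrow> A j = 0) \<and> (sl n j \<ge> 1 \<longrightarrow> degree (A j) \<le> sl n j - 1)) \<and>
     (\<forall>k\<le>n - 1. (\<Sum>i=1..N. (alpha 1 i * poly (A 1) (z i) + alpha 2 i * poly (A 2) (z i)) * z i ^ k)
                  = (if k = n - 1 then 1 else 0))"

definition typeII :: "nat \<Rightarrow> (nat \<Rightarrow> real) \<Rightarrow> (nat \<Rightarrow> nat \<Rightarrow> real) \<Rightarrow> nat \<Rightarrow> real poly \<Rightarrow> bool" where
  "typeII N z alpha n P \<longleftrightarrow>
     degree P = n \<and> lead_coeff P = 1 \<and>
     (\<forall>j\<in>{1,2::nat}. \<forall>k<sl n j. (\<Sum>i=1..N. alpha j i * poly P (z i) * z i ^ k) = 0)"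

end

theory Submission
  imports Defs
begin

theorem mainTheorem3:
  fixes N :: nat and D :: "real set" and z :: "nat \<Rightarrow> real" and alpha :: "nat \<Rightarrow> nat \<Rightarrow> real"
    and A :: "nat \<Rightarrow> nat \<Rightarrow> real poly" and P :: "nat \<Rightarrow> real poly"
    and b c d :: "nat \<Rightarrow> real"
  assumes interval: "is_interval D"
    and nodes_in: "\<forall>i\<in>{1..N}. z i \<in> D"
    and nodes_distinct: "inj_on z {1..N}"
    and weights_pos: "\<forall>j\<in>{1,2}. \<forall>i\<in>{1..N}. alpha j i > 0"
    and AT: "AT_system D N z alpha"
    and typeI_A: "\<forall>n\<in>{1..N}. typeI N z alpha n (A n)"
    and exact_deg: "\<forall>n\<in>{1..N}. \<forall>j\<in>{1,2}. sl n j \<ge> 1 \<longrightarrow> A n j \<noteq> 0 \<and> degree (A n j) = sl n j - 1"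
    and A0: "\<forall>j\<in>{1,2}. A 0 j = 0"
    and typeII_P: "\<forall>n\<le>N. typeII N z alpha n (P n)"
    and recII: "\<forall>n<N. [:0, 1:] * P n = P (n + 1) + smult (b n) (P n)
                   + (if n \<ge> 1 then smult (c n) (P (n - 1)) else 0)
                   + (if n \<ge> 2 then smult (d n) (P (n - 2)) else 0)"
    and recI: "\<forall>n\<in>{1..N - 2}. \<forall>j\<in>{1,2}.
                 [:0, 1:] * A n j = A (n - 1) j + smult (b (n - 1)) (A n j)
                   + smult (c n) (A (n + 1) j) + smult (d (n + 1)) (A (n + 2) j)"
  shows "\<forall>n\<in>{1..N - 2}. d (n + 1) \<noteq> 0"
proof
  fix n assume n: "n \<in> {1..N - 2}"
  hence n1: "1 \<le> n" and nN: "n + 2 \<le> N" by auto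
  define j :: nat where "j = (if even n then 2 else 1)"
  have j12: "j \<in> {1,2}" by (simp add: j_def)
  define m where "m = sl n j"
  have m1: "m \<ge> 1" using n1 by (auto simp: m_def j_def sl_def elim!: evenE oddE)
  have slp: "sl (n+1) j = m" by (auto simp: m_def j_def sl_def elim!: evenE oddE)
  have slm: "sl (n-1) j \<le> m" using n1 by (auto simp: m_def j_def sl_def elim!: evenE oddE)
  have nz: "A n j \<noteq> 0" and dn: "degree (A n j) = m - 1"
    using exact_deg n1 nN j12 m1 unfolding m_def by auto
  have tI: "\<And>k. k \<in> {1..N} \<Longrightarrow> (sl k j = 0 \<longrightarrow> A k j = 0) \<and> (sl k j \<ge> 1 \<longrightarrow> degree (A k j) \<le> sl k j - 1)"
    using typeI_A j12 unfolding typeI_def by blast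
  have dn1: "degree (A (n+1) j) \<le> m - 1" using tI[of "n+1"] nN slp by auto
  have dm1: "degree (A (n-1) j) \<le> m - 1"
  proof (cases "n - 1 = 0")
    case True thus ?thesis using A0 j12 by auto
  next
    case False
    hence "n - 1 \<in> {1..N}" using nN by auto
    from tI[OF this] slm show ?thesis by (cases "sl (n-1) j = 0") auto
  qed
  show "d (n + 1) \<noteq> 0"
  proof
    assume d0: "d (n + 1) = 0"
    have eq: "[:0, 1:] * A n j = A (n - 1) j + smult (b (n - 1)) (A n j) + smult (c n) (A (n + 1) j)"
      using recI n j12 d0 by auto
    have "degree ([:0, 1:] * A n j) = m" using nz dn m1
      by (subst degree_mult_eq) auto
    moreover have "degree (A (n - 1) j + smult (b (n - 1)) (A n j) + smult (c n) (A (n + 1) j)) \<le> m - 1"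
      by (intro degree_add_le degree_smult_le[THEN order_trans] dm1 dn1) (simp add: dn)
    ultimately have "m \<le> m - 1" using eq by metis
    thus False using m1 by linarith
  qed
qed

end
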